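(* In the multi-parameter setting described in the context, for every Kraus representation $\{E_k(\theta)\}$ of the channel, $H(\theta)\le C_E(\theta)$ as $m\times m$ real symmetric matrices, where $C_E(\theta)_{jk}=4\sum_l\mathrm{Re}\,\mathrm{tr}\{E_l^{(j)}(\theta)\rho_0E_l^{(k)}(\theta)^\dagger\}$.
   Context: A multi-parameter quantum channel on density matrices on $\mathbb{C}^d$ is $\rho_0\mapsto\sum_kE_k(\theta)\rho_0E_k(\theta)^\dagger$ with $\theta=(\theta^1,\dots,\theta^m)\in\mathbb{R}^m$, Kraus operators differentiable in $\theta$, $\sum_kE_k^\dagger E_k=I$; a channel may have many Kraus representations. The input is a fixed pure state $\rho_0=|\psi_0\rangle\langle\psi_0|$ with output $\rho_{out}(\theta)$. Write $X^{(j)}=\partial X/\partial\theta^j$. The SLD quantum information matrix is $H(\theta)_{jk}=\mathrm{Re}\,\mathrm{tr}\{\lambda^{(j)}\rho_{out}\lambda^{(k)}\}$, with $\lambda^{(j)}$ a self-adjoint solution of $\partial\rho_{out}/\partial\theta^j=\frac12(\rho_{out}\lambda^{(j)}+\lambda^{(j)}\rho_{out})$. *)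

theory Defs
  imports "HOL-Analysis.Analysis"
begin

definition cadj :: "complex^'d^'d \<Rightarrow> complex^'d^'d" where
  "cadj A = (\<chi> i j. cnj (A $ j $ i))"

definition ketbra :: "complex^'d \<Rightarrow> complex^'d^'d" where
  "ketbra psi = (\<chi> i j. psi $ i * cnj (psi $ j))"

definition pd :: "(real^'m \<Rightarrow> 'a::real_normed_vector) \<Rightarrow> real^'m \<Rightarrow> 'm \<Rightarrow> 'a" where
  "pd f \<theta> j = vector_derivative (\<lambda>t. f (\<theta> + t *\<^sub>R axis j 1)) (at 0)"

definition chan_out :: "('k::finite \<Rightarrow> real^'m \<Rightarrow> complex^'d^'d) \<Rightarrow> complex^'d^'d \<Rightarrow> real^'m \<Rightarrow> complex^'d^'d" where
  "chan_out E \<rho>0 \<theta> = (\<Sum>k\<in>UNIV. E k \<theta> ** \<rho>0 ** cadj (E k \<theta>))"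

definition is_SLD :: "(real^'m \<Rightarrow> complex^'d^'d) \<Rightarrow> real^'m \<Rightarrow> 'm \<Rightarrow> complex^'d^'d \<Rightarrow> bool" where
  "is_SLD \<rho> \<theta> j lam \<longleftrightarrow> cadj lam = lam \<and>
     pd \<rho> \<theta> j = (1/2 :: real) *\<^sub>R (\<rho> \<theta> ** lam + lam ** \<rho> \<theta>)"

definition SLD_info :: "complex^'d^'d \<Rightarrow> ('m \<Rightarrow> complex^'d^'d) \<Rightarrow> real^'m^'m" where
  "SLD_info \<rho> lam = (\<chi> j k. Re (trace (lam j ** \<rho> ** lam k)))"

definition C_E :: "('k::finite \<Rightarrow> real^'m \<Rightarrow> complex^'d^'d) \<Rightarrow> complex^'d^'d \<Rightarrow> real^'m \<Rightarrow> real^'m^'m" where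
  "C_E E \<rho>0 \<theta> = (\<chi> j k. 4 * (\<Sum>l\<in>UNIV. Re (trace (pd (E l) \<theta> j ** \<rho>0 ** cadj (pd (E l) \<theta> k)))))"

definition loewner_le :: "real^'m^'m \<Rightarrow> real^'m^'m \<Rightarrow> bool" where
  "loewner_le A B \<longleftrightarrow> (\<forall>v. v \<bullet> (A *v v) \<le> v \<bullet> (B *v v))"

end

theory Submission imports Defs begin

definition ip :: "complex^'d \<Rightarrow> complex^'d \<Rightarrow> complex" where
  "ip x y = (\<Sum>a\<in>UNIV. x$a * cnj (y$a))"

lemma ip_add_left: "ip (x + y) z = ip x z + ip y z"
  by (simp add: ip_def distrib_right sum.distrib)
lemma ip_add_right: "ip x (y + z) = ip x y + ip x z"
  by (simp add: ip_def distrib_left sum.distrib)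
lemma ip_diff_left: "ip (x - y) z = ip x z - ip y z"
  by (simp add: ip_def left_diff_distrib sum_subtractf)
lemma ip_diff_right: "ip x (y - z) = ip x y - ip x z"
  by (simp add: ip_def right_diff_distrib sum_subtractf)
lemma ip_scaleR_left: "ip (r *\<^sub>R x) z = of_real r * ip x z"
  unfolding ip_def by (simp add: sum_distrib_left) (simp add: scaleR_conv_of_real mult_ac)
lemma ip_scaleR_right: "ip x (r *\<^sub>R z) = of_real r * ip x z"
  unfolding ip_def by (simp add: sum_distrib_left) (simp add: scaleR_conv_of_real mult_ac)
lemma ip_zero_left[simp]: "ip 0 z = 0" by (simp add: ip_def)
lemma ip_zero_right[simp]: "ip z 0 = 0" by (simp add: ip_def)
lemma ip_sum_left: "finite S \<Longrightarrow> ip (\<Sum>j\<in>S. f j) z = (\<Sum>j\<in>S. ip (f j) z)"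
  by (induct S rule: finite_induct) (simp_all add: ip_add_left)
lemma ip_sum_right: "finite S \<Longrightarrow> ip z (\<Sum>j\<in>S. f j) = (\<Sum>j\<in>S. ip z (f j))"
  by (induct S rule: finite_induct) (simp_all add: ip_add_right)
lemma ip_swap: "ip y x = cnj (ip x y)"
  by (simp add: ip_def mult.commute)
lemma Re_ip_swap: "Re (ip y x) = Re (ip x y)"
  by (subst ip_swap) simp
lemma Re_ip_self: "0 \<le> Re (ip x x)"
  unfolding ip_def Re_sum by (rule sum_nonneg) simp

lemma ip_move: "ip x (L *v y) = ip (cadj L *v x) y"
proof -
  have "ip x (L *v y) = (\<Sum>a\<in>UNIV. \<Sum>b\<in>UNIV. x$a * cnj (L$a$b) * cnj (y$b))"
    by (simp add: ip_def matrix_vector_mult_def sum_distrib_left mult_ac)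
  also have "\<dots> = (\<Sum>b\<in>UNIV. \<Sum>a\<in>UNIV. x$a * cnj (L$a$b) * cnj (y$b))"
    by (rule sum.swap)
  also have "\<dots> = ip (cadj L *v x) y"
    by (simp add: ip_def cadj_def matrix_vector_mult_def sum_distrib_right sum_distrib_left mult_ac)
  finally show ?thesis .
qed

lemma cadj_mult: "cadj (A ** B) = cadj B ** cadj A"
  by (simp add: cadj_def matrix_matrix_mult_def vec_eq_iff mult.commute)
lemma cadj_cadj[simp]: "cadj (cadj A) = A"
  by (simp add: cadj_def vec_eq_iff)
lemma cadj_add: "cadj (A + B) = cadj A + cadj B"
  by (simp add: cadj_def vec_eq_iff)
lemma cadj_scaleR: "cadj (r *\<^sub>R A) = r *\<^sub>R cadj A"
  by (simp add: cadj_def vec_eq_iff)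

lemma TR: "trace (X ** ketbra \<psi> ** Y) = ip (X *v \<psi>) (cadj Y *v \<psi>)"
proof -
  have K1: "(X ** ketbra \<psi>) $ i $ c = (X *v \<psi>)$i * cnj (\<psi>$c)" for i c
    by (simp add: matrix_matrix_mult_def ketbra_def matrix_vector_mult_def sum_distrib_right sum_distrib_left mult_ac)
  have K2: "(X ** ketbra \<psi> ** Y) $ i $ i = (X *v \<psi>)$i * (\<Sum>c\<in>UNIV. cnj (\<psi>$c) * Y$c$i)" for i
    by (simp add: matrix_matrix_mult_def[of "X ** ketbra \<psi>" Y] K1 sum_distrib_left mult_ac)
  have K3: "cnj ((cadj Y *v \<psi>)$i) = (\<Sum>c\<in>UNIV. cnj (\<psi>$c) * Y$c$i)" for i
    by (simp add: cadj_def matrix_vector_mult_def mult_ac)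
  show ?thesis by (simp add: trace_def ip_def K2 K3)
qed

lemma matrix_add_rdistrib: "((B + C) ** A) = (B ** A) + (C ** A)"
  by (vector matrix_matrix_mult_def sum.distrib[symmetric] field_simps)
lemma mult_sum_left: "finite S \<Longrightarrow> (\<Sum>i\<in>S. f i) ** B = (\<Sum>i\<in>S. f i ** B)"
  by (induct S rule: finite_induct) (auto simp: matrix_add_rdistrib)
lemma mult_sum_right: "finite S \<Longrightarrow> B ** (\<Sum>i\<in>S. f i) = (\<Sum>i\<in>S. B ** f i)"
  by (induct S rule: finite_induct) (auto simp: matrix_add_ldistrib)
lemma trace_sum: "finite S \<Longrightarrow> trace (\<Sum>i\<in>S. f i) = (\<Sum>i\<in>S. trace (f i :: complex^'n^'n))"
  by (induct S rule: finite_induct) (simp_all add: trace_add, simp add: trace_def)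
lemma trace_scaleR: "trace (r *\<^sub>R (A::complex^'n^'n)) = r *\<^sub>R trace A"
  by (simp add: trace_def scaleR_sum_right)
lemma scaleR_mult_left: "(r *\<^sub>R (A::complex^'n^'n)) ** B = r *\<^sub>R (A ** B)"
  by (simp add: matrix_matrix_mult_def vec_eq_iff scaleR_sum_right)
lemma scaleR_mult_right: "(A::complex^'n^'n) ** (r *\<^sub>R B) = r *\<^sub>R (A ** B)"
  by (simp add: matrix_matrix_mult_def vec_eq_iff scaleR_sum_right)

lemma bb_mult: "bounded_bilinear ((**) :: complex^'d^'d \<Rightarrow> complex^'d^'d \<Rightarrow> complex^'d^'d)"
  unfolding bilinear_conv_bounded_bilinear[symmetric] bilinear_def
  by (auto intro!: linearI simp: matrix_add_rdistrib matrix_add_ldistrib scaleR_mult_left scaleR_mult_right)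

lemma bl_cadj: "bounded_linear (cadj :: complex^'d^'d \<Rightarrow> complex^'d^'d)"
  unfolding linear_conv_bounded_linear[symmetric]
  by (auto intro!: linearI simp: cadj_add cadj_scaleR)

lemma bl_multK: "bounded_linear (\<lambda>X::complex^'d^'d. X ** (K::complex^'d^'d))"
  using bounded_bilinear.bounded_linear_left[OF bb_mult] .

lemma pd_line:
  assumes "f differentiable (at \<theta>)"
  shows "((\<lambda>t. f (\<theta> + t *\<^sub>R axis j 1)) has_vector_derivative pd f \<theta> j) (at 0)"
proof -
  have l: "((\<lambda>t::real. \<theta> + t *\<^sub>R axis j 1) has_vector_derivative axis j 1) (at 0)"
    by (auto intro!: derivative_eq_intros)
  have "(f \<circ> (\<lambda>t::real. \<theta> + t *\<^sub>R axis j 1)) differentiable (at 0)"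
    by (rule differentiable_chain_at[OF differentiableI_vector[OF l]]) (simp add: assms)
  then show ?thesis unfolding pd_def vector_derivative_works[symmetric] by (simp add: o_def)
qed

lemma pd_chan:
  fixes E :: "'k::finite \<Rightarrow> real^'m \<Rightarrow> complex^'d^'d"
  assumes "\<And>k. E k differentiable (at \<theta>)"
  shows "pd (chan_out E K) \<theta> j = (\<Sum>k\<in>UNIV. E k \<theta> ** K ** cadj (pd (E k) \<theta> j) + pd (E k) \<theta> j ** K ** cadj (E k \<theta>))"
proof -
  let ?g = "\<lambda>k t. E k (\<theta> + t *\<^sub>R axis j 1)"
  have d: "(?g k has_vector_derivative pd (E k) \<theta> j) (at 0)" for k
    using pd_line[OF assms] .
  have d2: "((\<lambda>t. ?g k t ** K) has_vector_derivative pd (E k) \<theta> j ** K) (at 0)" for k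
    using bounded_linear.has_vector_derivative[OF bl_multK d] .
  have d3: "((\<lambda>t. cadj (?g k t)) has_vector_derivative cadj (pd (E k) \<theta> j)) (at 0)" for k
    using bounded_linear.has_vector_derivative[OF bl_cadj d] .
  have d4: "((\<lambda>t. ?g k t ** K ** cadj (?g k t)) has_vector_derivative
      (E k \<theta> ** K ** cadj (pd (E k) \<theta> j) + pd (E k) \<theta> j ** K ** cadj (E k \<theta>))) (at 0)" for k
    using bounded_bilinear.has_vector_derivative[OF bb_mult d2[of k] d3[of k]] by simp
  have "((\<lambda>t. chan_out E K (\<theta> + t *\<^sub>R axis j 1)) has_vector_derivative
      (\<Sum>k\<in>UNIV. E k \<theta> ** K ** cadj (pd (E k) \<theta> j) + pd (E k) \<theta> j ** K ** cadj (E k \<theta>))) (at 0)"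
    unfolding chan_out_def by (rule has_vector_derivative_sum) (rule d4)
  then show ?thesis unfolding pd_def by (rule vector_derivative_at)
qed

lemma G1:
  fixes c :: "'m::finite \<Rightarrow> real"
  shows "Re (ip (\<Sum>j\<in>UNIV. c j *\<^sub>R (x j::complex^'d)) (\<Sum>k\<in>UNIV. c k *\<^sub>R z k))
   = (\<Sum>j\<in>UNIV. \<Sum>k\<in>UNIV. c j * c k * Re (ip (x j) (z k)))"
proof -
  have "Re (ip (\<Sum>j\<in>UNIV. c j *\<^sub>R (x j::complex^'d)) (\<Sum>k\<in>UNIV. c k *\<^sub>R z k))
     = (\<Sum>k\<in>UNIV. \<Sum>j\<in>UNIV. c j * c k * Re (ip (x j) (z k)))"
    by (simp add: ip_sum_left ip_sum_right ip_scaleR_left ip_scaleR_right sum_distrib_left mult_ac)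
  also have "\<dots> = (\<Sum>j\<in>UNIV. \<Sum>k\<in>UNIV. c j * c k * Re (ip (x j) (z k)))"
    by (rule sum.swap)
  finally show ?thesis .
qed

lemma G:
  fixes c :: "'m::finite \<Rightarrow> real" and x z :: "'l::finite \<Rightarrow> 'm \<Rightarrow> complex^'d"
  shows "(\<Sum>j\<in>UNIV. \<Sum>k\<in>UNIV. c j * c k * (\<Sum>l\<in>UNIV. Re (ip (x l j) (z l k))))
    = (\<Sum>l\<in>UNIV. Re (ip (\<Sum>j\<in>UNIV. c j *\<^sub>R x l j) (\<Sum>k\<in>UNIV. c k *\<^sub>R z l k)))"
proof -
  have "(\<Sum>j\<in>UNIV. \<Sum>k\<in>UNIV. c j * c k * (\<Sum>l\<in>UNIV. Re (ip (x l j) (z l k))))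
     = (\<Sum>j\<in>UNIV. \<Sum>k\<in>UNIV. \<Sum>l\<in>UNIV. c j * c k * Re (ip (x l j) (z l k)))"
    by (simp add: sum_distrib_left)
  also have "\<dots> = (\<Sum>j\<in>UNIV. \<Sum>l\<in>UNIV. \<Sum>k\<in>UNIV. c j * c k * Re (ip (x l j) (z l k)))"
    by (rule sum.cong[OF refl], rule sum.swap)
  also have "\<dots> = (\<Sum>l\<in>UNIV. \<Sum>j\<in>UNIV. \<Sum>k\<in>UNIV. c j * c k * Re (ip (x l j) (z l k)))"
    by (rule sum.swap)
  finally show ?thesis by (simp add: G1)
qed

lemma Q: "v \<bullet> ((M::real^'m^'m) *v v) = (\<Sum>j\<in>UNIV. \<Sum>k\<in>UNIV. v$j * v$k * M$j$k)"
  by (simp add: inner_vec_def matrix_vector_mult_def sum_distrib_left mult_ac)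

lemma key_ineq: "2 * Re (ip a w) \<le> 2 * Re (ip a a) + Re (ip w w) / 2"
proof -
  have "0 \<le> Re (ip (2 *\<^sub>R a - w) (2 *\<^sub>R a - w))" by (rule Re_ip_self)
  also have "\<dots> = 4 * Re (ip a a) - 2 * Re (ip a w) - 2 * Re (ip w a) + Re (ip w w)"
    by (simp add: ip_diff_left ip_diff_right ip_scaleR_left ip_scaleR_right)
  finally show ?thesis using Re_ip_swap[of a w] by linarith
qed

theorem lemma12:
  fixes E :: "'k::finite \<Rightarrow> real^'m \<Rightarrow> complex^'d^'d"
    and \<psi>0 :: "complex^'d"
    and \<theta> :: "real^'m"
    and lam :: "'m \<Rightarrow> complex^'d^'d"
  assumes diff: "\<And>k \<theta>'. E k differentiable (at \<theta>')"
    and kraus: "\<And>\<theta>'. (\<Sum>k\<in>UNIV. cadj (E k \<theta>') ** E k \<theta>') = mat 1"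
    and norm: "norm \<psi>0 = 1"
    and sld: "\<And>j. is_SLD (chan_out E (ketbra \<psi>0)) \<theta> j (lam j)"
  shows "loewner_le (SLD_info (chan_out E (ketbra \<psi>0) \<theta>) lam) (C_E E (ketbra \<psi>0) \<theta>)"
proof -
  define K where "K = ketbra \<psi>0"
  define \<rho> where "\<rho> = chan_out E K \<theta>"
  define u where "u l = E l \<theta> *v \<psi>0" for l
  define p where "p l j = pd (E l) \<theta> j *v \<psi>0" for l j
  define y where "y l k = lam k *v u l" for l k
  have herm: "cadj (lam j) = lam j" for j using sld[of j] by (simp add: is_SLD_def)
  have tr1: "trace (X ** \<rho> ** Y) = (\<Sum>l\<in>UNIV. ip (X *v u l) (cadj Y *v u l))" for X Y
  proof -
    have "X ** \<rho> ** Y = (\<Sum>l\<in>UNIV. (X ** E l \<theta>) ** K ** (cadj (E l \<theta>) ** Y))"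
      unfolding \<rho>_def chan_out_def by (simp add: mult_sum_left mult_sum_right matrix_mul_assoc)
    then show ?thesis
      by (simp add: trace_sum K_def TR cadj_mult u_def matrix_vector_mul_assoc)
  qed
  have H: "trace (lam j ** \<rho> ** lam k) = (\<Sum>l\<in>UNIV. ip (y l j) (y l k))" for j k
    by (simp add: tr1 herm y_def)
  have C: "C_E E K \<theta> $ j $ k = 4 * (\<Sum>l\<in>UNIV. Re (ip (p l j) (p l k)))" for j k
    by (simp add: C_E_def TR p_def K_def)
  have T: "Re (trace (pd (chan_out E K) \<theta> j ** lam k)) = (\<Sum>l\<in>UNIV. 2 * Re (ip (p l j) (y l k)))" for j k
  proof -
    have "pd (chan_out E K) \<theta> j ** lam k = (\<Sum>l\<in>UNIV. E l \<theta> ** K ** (cadj (pd (E l) \<theta> j) ** lam k)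
         + pd (E l) \<theta> j ** K ** (cadj (E l \<theta>) ** lam k))"
      by (simp add: pd_chan[OF diff] mult_sum_left matrix_add_rdistrib matrix_mul_assoc)
    then have "trace (pd (chan_out E K) \<theta> j ** lam k) =
       (\<Sum>l\<in>UNIV. ip (u l) (lam k *v p l j) + ip (p l j) (y l k))"
      by (simp add: trace_sum trace_add K_def TR cadj_mult herm u_def p_def y_def matrix_vector_mul_assoc)
    also have "\<dots> = (\<Sum>l\<in>UNIV. ip (y l k) (p l j) + ip (p l j) (y l k))"
      by (simp add: ip_move herm y_def)
    finally show ?thesis by (simp add: Re_sum Re_ip_swap[of "y _ k"])
  qed
  have S: "Re (trace (pd (chan_out E K) \<theta> j ** lam k)) = (\<Sum>l\<in>UNIV. Re (ip (y l j) (y l k)))" for j k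
  proof -
    have "pd (chan_out E K) \<theta> j = (1/2::real) *\<^sub>R (\<rho> ** lam j + lam j ** \<rho>)"
      using sld[of j] by (simp add: is_SLD_def K_def \<rho>_def)
    then have "trace (pd (chan_out E K) \<theta> j ** lam k) = (1/2::real) *\<^sub>R (trace (\<rho> ** lam j ** lam k) + trace (lam j ** \<rho> ** lam k))"
      by (simp add: scaleR_mult_left matrix_add_rdistrib trace_scaleR trace_add)
    moreover have "trace (\<rho> ** lam j ** lam k) = trace (lam k ** \<rho> ** lam j)"
      by (metis trace_mul_sym matrix_mul_assoc)
    ultimately show ?thesis
      by (simp add: H Re_sum Re_ip_swap[of "y _ k"])
  qed
  show ?thesis
    unfolding loewner_le_def
  proof
    fix v :: "real^'m"
    define w where "w l = (\<Sum>j\<in>UNIV. v$j *\<^sub>R y l j)" for l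
    define a where "a l = (\<Sum>j\<in>UNIV. v$j *\<^sub>R p l j)" for l
    have L1: "v \<bullet> (SLD_info \<rho> lam *v v) = (\<Sum>l\<in>UNIV. Re (ip (w l) (w l)))"
      unfolding Q SLD_info_def w_def by (simp add: H Re_sum G)
    have L2: "v \<bullet> (SLD_info \<rho> lam *v v) = 2 * (\<Sum>l\<in>UNIV. Re (ip (a l) (w l)))"
    proof -
      have "v \<bullet> (SLD_info \<rho> lam *v v) = (\<Sum>j\<in>UNIV. \<Sum>k\<in>UNIV. v$j * v$k * (\<Sum>l\<in>UNIV. Re (ip (p l j) (y l k))) * 2)"
        unfolding Q SLD_info_def using S T by (simp add: H Re_sum sum_distrib_left[symmetric] mult_ac)
      also have "\<dots> = 2 * (\<Sum>l\<in>UNIV. Re (ip (a l) (w l)))"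
        unfolding a_def w_def G[symmetric] by (simp add: sum_distrib_left sum_distrib_right mult_ac)
      finally show ?thesis .
    qed
    have L3: "v \<bullet> (C_E E K \<theta> *v v) = 4 * (\<Sum>l\<in>UNIV. Re (ip (a l) (a l)))"
    proof -
      have "v \<bullet> (C_E E K \<theta> *v v) = 4 * (\<Sum>j\<in>UNIV. \<Sum>k\<in>UNIV. v$j * v$k * (\<Sum>l\<in>UNIV. Re (ip (p l j) (p l k))))"
        unfolding Q C by (simp add: sum_distrib_left mult_ac)
      then show ?thesis unfolding a_def G .
    qed
    have "2 * (\<Sum>l\<in>UNIV. Re (ip (a l) (w l))) \<le> (\<Sum>l\<in>UNIV. 2 * Re (ip (a l) (a l)) + Re (ip (w l) (w l)) / 2)"
      unfolding sum_distrib_left by (rule sum_mono) (rule key_ineq)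
    also have "\<dots> = 2 * (\<Sum>l\<in>UNIV. Re (ip (a l) (a l))) + (\<Sum>l\<in>UNIV. Re (ip (w l) (w l))) / 2"
      by (simp add: sum.distrib sum_distrib_left sum_divide_distrib)
    finally show "v \<bullet> (SLD_info (chan_out E (ketbra \<psi>0) \<theta>) lam *v v) \<le> v \<bullet> (C_E E (ketbra \<psi>0) \<theta> *v v)"
      using L1 L2 L3 unfolding \<rho>_def K_def by linarith
  qed
qed

end
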